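(* Let $J$ be a $3\times 3$ Jacobi matrix that realizes perfect state transfer, and let $T_0>0$ be the earliest time at which perfect state transfer occurs. Then $J$ does not have Early State Exclusion; that is, there is no $t$ with $0<t<T_0$ such that $(e^{-iJt}\mathbf{e}_0,\mathbf{e}_0)_{\mathbb{C}^{3}}=0$.
   Context: A Jacobi matrix of order $N+1$ is a real symmetric tridiagonal $(N+1)\times(N+1)$ matrix $J$ with diagonal entries $a_0,\dots,a_N\in\mathbb{R}$ and off-diagonal entries $b_0,\dots,b_{N-1}>0$. Let $\mathbf{e}_0,\dots,\mathbf{e}_N$ be the standard basis of $\mathbb{C}^{N+1}$. $J$ realizes perfect state transfer (PST) at time $T>0$ if $e^{-iTJ}\mathbf{e}_0=e^{i\phi}\mathbf{e}_N$ for some $\phi\in\mathbb{R}$. If $T_0$ is the earliest (smallest positive) such time, $J$ is said to have Early State Exclusion (ESE) at time $t$ if $0<t<T_0$ and $(e^{-iJt}\mathbf{e}_0,\mathbf{e}_0)_{\mathbb{C}^{N+1}}=0$. *)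

theory Defs
  imports "HOL-Analysis.Analysis"
begin

definition jacobi3 :: "real \<Rightarrow> real \<Rightarrow> real \<Rightarrow> real \<Rightarrow> real \<Rightarrow> complex^3^3" where
  "jacobi3 a0 a1 a2 b0 b1 = (\<chi> i j.
     if i = 0 \<and> j = 0 then complex_of_real a0
     else if i = 1 \<and> j = 1 then complex_of_real a1
     else if i = 2 \<and> j = 2 then complex_of_real a2
     else if (i = 0 \<and> j = 1) \<or> (i = 1 \<and> j = 0) then complex_of_real b0
     else if (i = 1 \<and> j = 2) \<or> (i = 2 \<and> j = 1) then complex_of_real b1
     else 0)"

primrec mpow :: "complex^'n^'n \<Rightarrow> nat \<Rightarrow> complex^'n^'n" where
  "mpow A 0 = mat 1"
| "mpow A (Suc k) = A ** mpow A k"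

definition mexp :: "complex^'n^'n \<Rightarrow> complex^'n^'n" where
  "mexp A = (\<chi> i j. (\<Sum>k. (mpow A k) $ i $ j / of_nat (fact k)))"

definition mscale :: "complex \<Rightarrow> complex^'n^'n \<Rightarrow> complex^'n^'n" where
  "mscale c A = (\<chi> i j. c * A $ i $ j)"

definition evol :: "complex^'n^'n \<Rightarrow> real \<Rightarrow> complex^'n^'n" where
  "evol J t = mexp (mscale (- \<i> * complex_of_real t) J)"

definition cinner :: "complex^'n \<Rightarrow> complex^'n \<Rightarrow> complex" where
  "cinner x y = (\<Sum>i\<in>UNIV. x $ i * cnj (y $ i))"

definition e0 :: "complex^3" where "e0 = axis 0 1"
definition eN :: "complex^3" where "eN = axis 2 1"

definition PST :: "complex^3^3 \<Rightarrow> real \<Rightarrow> bool" where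
  "PST J T \<longleftrightarrow> T > 0 \<and> (\<exists>\<phi>::real. evol J T *v e0 = exp (\<i> * complex_of_real \<phi>) *s eN)"

end

theory Submission
  imports Defs
begin


lemma mscale_mult: "mscale c A ** mscale d B = mscale (c*d) (A ** B)"
  by (simp add: mscale_def matrix_matrix_mult_def vec_eq_iff sum_distrib_left mult_ac)

lemma mpow_add: "mpow A (k+m) = mpow A k ** mpow A m"
  by (induct k) (simp_all add: matrix_mul_assoc matrix_mul_lid)

lemma mpow_one: "mpow A 1 = A"
  by (simp add: matrix_mul_rid)

lemma mpow_comm: "mpow A k ** A = A ** mpow A k"
  using mpow_add[of A k 1] mpow_add[of A 1 k] by (simp add: mpow_one)

lemma mpow_mscale: "mpow (mscale c A) k = mscale (c^k) (mpow A k)"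
proof (induct k)
  case 0 then show ?case by (simp add: mscale_def mat_def vec_eq_iff)
next
  case (Suc k) then show ?case by (simp add: mscale_mult)
qed

lemma mpow_commute: "M ** A = A ** M \<Longrightarrow> M ** mpow A k = mpow A k ** M"
proof (induct k)
  case 0 then show ?case by (simp add: matrix_mul_lid matrix_mul_rid)
next
  case (Suc k)
  have "M ** mpow A (Suc k) = (M ** A) ** mpow A k" by (simp add: matrix_mul_assoc)
  also have "\<dots> = A ** (M ** mpow A k)" by (metis Suc.prems matrix_mul_assoc)
  also have "\<dots> = A ** (mpow A k ** M)" using Suc by simp
  also have "\<dots> = mpow A (Suc k) ** M" by (simp add: matrix_mul_assoc)
  finally show ?case .
qed

definition bnd :: "complex^'n^'n \<Rightarrow> real" where
  "bnd A = (\<Sum>a\<in>UNIV. \<Sum>b\<in>UNIV. norm (A$a$b))"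

lemma row_le_bnd: "(\<Sum>l\<in>UNIV. norm (A$i$l)) \<le> bnd A"
  unfolding bnd_def
  by (rule member_le_sum[where f="\<lambda>a. \<Sum>b\<in>UNIV. norm (A$a$b)"]) (auto intro: sum_nonneg)

lemma bnd_nonneg: "0 \<le> bnd A"
  unfolding bnd_def by (auto intro!: sum_nonneg)

lemma mpow_bound: "norm (mpow A k $ i $ j) \<le> bnd A ^ k"
proof (induct k arbitrary: i j)
  case 0 then show ?case by (simp add: mat_def)
next
  case (Suc k)
  have "norm (mpow A (Suc k) $ i $ j) = norm (\<Sum>l\<in>UNIV. A$i$l * mpow A k $ l $ j)"
    by (simp add: matrix_matrix_mult_def)
  also have "\<dots> \<le> (\<Sum>l\<in>UNIV. norm (A$i$l) * bnd A ^ k)"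
    by (rule order_trans[OF norm_sum sum_mono]) (simp add: norm_mult mult_left_mono Suc)
  also have "\<dots> = (\<Sum>l\<in>UNIV. norm (A$i$l)) * bnd A ^ k" by (simp add: sum_distrib_right)
  also have "\<dots> \<le> bnd A * bnd A ^ k"
    by (rule mult_right_mono[OF row_le_bnd]) (simp add: bnd_nonneg)
  finally show ?case by simp
qed

definition trm :: "complex \<Rightarrow> complex^'n^'n \<Rightarrow> 'n \<Rightarrow> 'n \<Rightarrow> nat \<Rightarrow> complex" where
  "trm c A i j k = c^k * (mpow A k $ i $ j / of_nat (fact k))"

lemma mexp_scale: "mexp (mscale c A) $ i $ j = (\<Sum>k. trm c A i j k)"
  unfolding mexp_def mpow_mscale by (simp add: trm_def mscale_def)

lemma trm_summable: "summable (\<lambda>k. norm (trm c A i j k))"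
proof (rule summable_comparison_test[OF _ summable_exp_generic[of "norm c * bnd A"]])
  show "\<exists>N. \<forall>n\<ge>N. norm (norm (trm c A i j n)) \<le> (norm c * bnd A) ^ n /\<^sub>R fact n"
  proof (intro exI allI impI)
    fix n
    have "norm (trm c A i j n) = norm c ^ n * norm (mpow A n $ i $ j) / fact n"
      by (simp add: trm_def norm_mult norm_divide norm_power)
    also have "\<dots> \<le> norm c ^ n * bnd A ^ n / fact n"
      by (intro divide_right_mono mult_left_mono mpow_bound) auto
    finally show "norm (norm (trm c A i j n)) \<le> (norm c * bnd A) ^ n /\<^sub>R fact n"
      by (simp add: power_mult_distrib divide_inverse_commute)
  qed
qed

lemma trm_summable': "summable (\<lambda>k. trm c A i j k)"
  using trm_summable summable_norm_cancel by blast

lemma binom_fact_sum: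
  "(\<Sum>k\<le>n. (c::complex)^k * d^(n-k) / (of_nat (fact k) * of_nat (fact (n-k)))) = (c+d)^n / of_nat (fact n)"
proof -
  have "(c+d)^n / of_nat (fact n) = (\<Sum>k\<le>n. of_nat (n choose k) * c^k * d^(n-k) / of_nat (fact n))"
    by (simp add: binomial_ring sum_divide_distrib)
  also have "\<dots> = (\<Sum>k\<le>n. c^k * d^(n-k) / (of_nat (fact k) * of_nat (fact (n-k))))"
  proof (rule sum.cong[OF refl])
    fix k assume "k \<in> {..n}"
    then have "k \<le> n" by simp
    then have "fact k * fact (n - k) * (n choose k) = (fact n :: nat)" by (rule binomial_fact_lemma)
    then have e: "of_nat (fact k) * of_nat (fact (n - k)) * of_nat (n choose k) = (of_nat (fact n) :: complex)"
      by (metis of_nat_mult)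
    have nz: "(of_nat (fact k) :: complex) \<noteq> 0" "(of_nat (fact (n-k)) :: complex) \<noteq> 0" by auto
    show "of_nat (n choose k) * c^k * d^(n-k) / of_nat (fact n) = c^k * d^(n-k) / (of_nat (fact k) * of_nat (fact (n-k)))"
      unfolding e[symmetric] using nz \<open>k \<le> n\<close> by (simp add: field_simps)
  qed
  finally show ?thesis by simp
qed

lemma inner_id: "(\<Sum>l\<in>UNIV. \<Sum>k\<le>n. trm c A i l k * trm d A l j (n-k)) = trm (c+d) A i j n"
proof -
  have "(\<Sum>l\<in>UNIV. \<Sum>k\<le>n. trm c A i l k * trm d A l j (n-k))
      = (\<Sum>k\<le>n. \<Sum>l\<in>UNIV. trm c A i l k * trm d A l j (n-k))" by (rule sum.swap)
  also have "\<dots> = (\<Sum>k\<le>n. c^k * d^(n-k) / (of_nat (fact k) * of_nat (fact (n-k))) * mpow A n $ i $ j)"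
  proof (rule sum.cong[OF refl])
    fix k assume "k \<in> {..n}"
    then have kn: "k + (n - k) = n" by simp
    have "(\<Sum>l\<in>UNIV. trm c A i l k * trm d A l j (n-k))
        = c^k * d^(n-k) / (of_nat (fact k) * of_nat (fact (n-k))) * (mpow A k ** mpow A (n-k)) $ i $ j"
      by (simp add: trm_def matrix_matrix_mult_def sum_distrib_left mult_ac)
    also have "\<dots> = c^k * d^(n-k) / (of_nat (fact k) * of_nat (fact (n-k))) * mpow A n $ i $ j"
      using mpow_add[of A k "n-k"] kn by simp
    finally show "(\<Sum>l\<in>UNIV. trm c A i l k * trm d A l j (n-k)) = \<dots>" .
  qed
  also have "\<dots> = (c+d)^n / of_nat (fact n) * mpow A n $ i $ j"
    by (subst sum_distrib_right[symmetric]) (simp only: binom_fact_sum)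
  finally show ?thesis by (simp add: trm_def)
qed

lemma mexp_mult: "mexp (mscale c A) ** mexp (mscale d A) = mexp (mscale (c+d) A)"
proof -
  have "(mexp (mscale c A) ** mexp (mscale d A)) $ i $ j = mexp (mscale (c+d) A) $ i $ j" for i j
  proof -
    have "(mexp (mscale c A) ** mexp (mscale d A)) $ i $ j
        = (\<Sum>l\<in>UNIV. (\<Sum>k. trm c A i l k) * (\<Sum>k. trm d A l j k))"
      by (simp add: matrix_matrix_mult_def mexp_scale)
    also have "\<dots> = (\<Sum>l\<in>UNIV. \<Sum>n. \<Sum>k\<le>n. trm c A i l k * trm d A l j (n-k))"
      by (simp add: Cauchy_product trm_summable)
    also have "\<dots> = (\<Sum>n. \<Sum>l\<in>UNIV. \<Sum>k\<le>n. trm c A i l k * trm d A l j (n-k))"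
      by (rule suminf_sum[symmetric]) (simp add: summable_Cauchy_product trm_summable)
    also have "\<dots> = (\<Sum>n. trm (c+d) A i j n)" by (simp add: inner_id)
    finally show ?thesis by (simp add: mexp_scale)
  qed
  then show ?thesis by (simp add: vec_eq_iff)
qed

lemma mexp_zero: "mexp (mscale 0 A) = mat 1"
proof -
  have "mexp (mscale 0 A) $ i $ j = mat 1 $ i $ j" for i j
  proof -
    have "(\<lambda>k. trm 0 A i j k) = (\<lambda>k. if k = 0 then mat 1 $ i $ j else 0)"
      by (auto simp: trm_def)
    then have "(\<lambda>k. trm 0 A i j k) sums mat 1 $ i $ j"
      using sums_single[of 0 "\<lambda>_. mat 1 $ i $ j"] by simp
    then show ?thesis by (simp add: mexp_scale sums_unique[symmetric])
  qed
  then show ?thesis by (simp add: vec_eq_iff)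
qed

lemma mpow_cnj:
  assumes hA: "\<And>a b. cnj (A$a$b) = A$b$a"
  shows "cnj (mpow A k $ a $ b) = mpow A k $ b $ a"
proof (induct k arbitrary: a b)
  case 0 then show ?case by (simp add: mat_def)
next
  case (Suc k)
  have "cnj (mpow A (Suc k) $ a $ b) = (\<Sum>l\<in>UNIV. mpow A k $ b $ l * A$l$a)"
    by (simp add: matrix_matrix_mult_def hA Suc mult.commute)
  also have "\<dots> = (mpow A k ** A) $ b $ a" by (simp add: matrix_matrix_mult_def)
  also have "\<dots> = mpow A (Suc k) $ b $ a" by (simp add: mpow_comm)
  finally show ?case .
qed

lemma mexp_cnj:
  assumes hA: "\<And>a b. cnj (A$a$b) = A$b$a"
  shows "cnj (mexp (mscale c A) $ a $ b) = mexp (mscale (cnj c) A) $ b $ a"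
proof -
  have "(\<lambda>k. trm c A a b k) sums (mexp (mscale c A) $ a $ b)"
    by (simp add: mexp_scale summable_sums trm_summable')
  then have "(\<lambda>k. cnj (trm c A a b k)) sums cnj (mexp (mscale c A) $ a $ b)"
    by (simp add: sums_cnj)
  moreover have "(\<lambda>k. cnj (trm c A a b k)) = (\<lambda>k. trm (cnj c) A b a k)"
    by (simp add: trm_def mpow_cnj[OF hA])
  ultimately have "(\<lambda>k. trm (cnj c) A b a k) sums cnj (mexp (mscale c A) $ a $ b)" by simp
  then show ?thesis by (simp add: mexp_scale sums_unique[symmetric])
qed

lemma mexp_commute:
  assumes "M ** A = A ** M"
  shows "M ** mexp (mscale c A) = mexp (mscale c A) ** M"
proof -
  have "(M ** mexp (mscale c A)) $ i $ j = (mexp (mscale c A) ** M) $ i $ j" for i j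
  proof -
    have "(M ** mexp (mscale c A)) $ i $ j = (\<Sum>l\<in>UNIV. \<Sum>k. M$i$l * trm c A l j k)"
      by (simp add: matrix_matrix_mult_def mexp_scale suminf_mult trm_summable')
    also have "\<dots> = (\<Sum>k. \<Sum>l\<in>UNIV. M$i$l * trm c A l j k)"
      by (rule suminf_sum[symmetric]) (simp add: summable_mult trm_summable')
    also have "\<dots> = (\<Sum>k. c^k * ((M ** mpow A k) $ i $ j / of_nat (fact k)))"
      by (simp add: trm_def matrix_matrix_mult_def sum_distrib_left sum_divide_distrib mult_ac)
    also have "\<dots> = (\<Sum>k. c^k * ((mpow A k ** M) $ i $ j / of_nat (fact k)))"
      by (simp add: mpow_commute[OF assms])
    also have "\<dots> = (\<Sum>k. \<Sum>l\<in>UNIV. trm c A i l k * M$l$j)"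
      by (simp add: trm_def matrix_matrix_mult_def sum_distrib_left sum_divide_distrib mult_ac)
    also have "\<dots> = (\<Sum>l\<in>UNIV. \<Sum>k. trm c A i l k * M$l$j)"
      by (rule suminf_sum) (simp add: summable_mult2 trm_summable')
    also have "\<dots> = (mexp (mscale c A) ** M) $ i $ j"
      by (simp add: matrix_matrix_mult_def mexp_scale suminf_mult2 trm_summable')
    finally show ?thesis .
  qed
  then show ?thesis by (simp add: vec_eq_iff)
qed



lemma sum3: "sum f (UNIV::3 set) = f 0 + f 1 + f 2"
proof -
  have "(3::3) = 0" by simp
  then have "f 3 = f 0" by (rule arg_cong)
  then show ?thesis using sum_3[of f] by (simp add: ac_simps)
qed

lemma three_cases: "(a::3) = 0 \<or> a = 1 \<or> a = 2"
proof -
  have "(3::3) = 0" by simp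
  then show ?thesis using exhaust_3[of a] by metis
qed

lemma three_neq: "(0::3) \<noteq> 1" "(0::3) \<noteq> 2" "(1::3) \<noteq> 2" "(1::3) \<noteq> 0" "(2::3) \<noteq> 0" "(2::3) \<noteq> 1"
  by simp_all

lemma jac_herm: "cnj (jacobi3 a0 a1 a2 b0 b1 $ a $ b) = jacobi3 a0 a1 a2 b0 b1 $ b $ a"
  using three_cases[of a] three_cases[of b] by (elim disjE) (simp_all add: jacobi3_def)

lemma evol_unitary:
  assumes hA: "\<And>a b. cnj (A$a$b) = A$b$a"
  shows "(\<Sum>l\<in>UNIV. cnj (evol A t $ l $ a) * evol A t $ l $ b) = mat 1 $ a $ b"
proof -
  have "(\<Sum>l\<in>UNIV. cnj (evol A t $ l $ a) * evol A t $ l $ b)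
     = (mexp (mscale (cnj (- \<i> * complex_of_real t)) A) ** mexp (mscale (- \<i> * complex_of_real t) A)) $ a $ b"
    by (simp add: evol_def matrix_matrix_mult_def mexp_cnj[OF hA])
  also have "\<dots> = mexp (mscale 0 A) $ a $ b"
    by (simp add: mexp_mult)
  finally show ?thesis by (simp add: mexp_zero)
qed



lemma mv_e0: "(M *v e0) $ i = M $ i $ (0::3)"
  by (simp add: e0_def matrix_vector_mult_def axis_def sum3)

lemma eN_comp: "eN $ i = (if i = (2::3) then 1 else 0)"
  by (simp add: eN_def axis_def)

lemma cinner_e0: "cinner x e0 = x $ 0"
  by (simp add: cinner_def e0_def axis_def sum3)

lemma jac_comm: "jacobi3 a0 a1 a2 b0 b1 ** evol (jacobi3 a0 a1 a2 b0 b1) t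
   = evol (jacobi3 a0 a1 a2 b0 b1) t ** jacobi3 a0 a1 a2 b0 b1"
  unfolding evol_def by (rule mexp_commute) simp

lemma uni3:
  fixes U :: "complex^3^3"
  assumes "(\<Sum>l\<in>UNIV. cnj (U $ l $ a) * U $ l $ b) = mat 1 $ a $ b"
  shows "cnj (U$0$a) * U$0$b + cnj (U$1$a) * U$1$b + cnj (U$2$a) * U$2$b = (if a = b then 1 else 0)"
  using assms by (simp add: sum3 mat_def)

lemma PST_col:
  assumes "PST (jacobi3 a0 a1 a2 b0 b1) T"
  obtains c where "norm c = 1" "evol (jacobi3 a0 a1 a2 b0 b1) T $ 0 $ 0 = 0"
    "evol (jacobi3 a0 a1 a2 b0 b1) T $ 1 $ 0 = 0" "evol (jacobi3 a0 a1 a2 b0 b1) T $ 2 $ 0 = c"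
proof -
  obtain \<phi> :: real where h: "evol (jacobi3 a0 a1 a2 b0 b1) T *v e0 = exp (\<i> * complex_of_real \<phi>) *s eN"
    using assms by (auto simp: PST_def)
  have "norm (exp (\<i> * complex_of_real \<phi>)) = 1" by (simp add: norm_exp_i_times)
  moreover have "(evol (jacobi3 a0 a1 a2 b0 b1) T *v e0) $ i = (exp (\<i> * complex_of_real \<phi>) *s eN) $ i" for i
    using h by simp
  ultimately show ?thesis using that
    by (metis (no_types, lifting) mv_e0 eN_comp vector_smult_component mult_zero_right mult_1_right three_neq)
qed



lemma jac_entries:
  "jacobi3 a0 a1 a2 b0 b1 $ 0 $ 0 = a0" "jacobi3 a0 a1 a2 b0 b1 $ 0 $ 1 = b0" "jacobi3 a0 a1 a2 b0 b1 $ 0 $ 2 = 0"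
  "jacobi3 a0 a1 a2 b0 b1 $ 1 $ 0 = b0" "jacobi3 a0 a1 a2 b0 b1 $ 1 $ 1 = a1" "jacobi3 a0 a1 a2 b0 b1 $ 1 $ 2 = b1"
  "jacobi3 a0 a1 a2 b0 b1 $ 2 $ 0 = 0" "jacobi3 a0 a1 a2 b0 b1 $ 2 $ 1 = b1" "jacobi3 a0 a1 a2 b0 b1 $ 2 $ 2 = a2"
  by (simp_all add: jacobi3_def)

lemma cnj_norm1: "cnj z * z = 1 \<Longrightarrow> norm z = 1"
proof -
  assume "cnj z * z = 1"
  then have "complex_of_real ((norm z)^2) = 1" by (simp only: complex_norm_square mult.commute)
  then have "(norm z)^2 = 1" using of_real_eq_1_iff by blast
  then show ?thesis using norm_ge_zero[of z] by (auto simp add: power2_eq_1_iff)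
qed

lemma PST_sym:
  assumes b0: "b0 > 0" and b1: "b1 > 0" and P: "PST (jacobi3 a0 a1 a2 b0 b1) T"
  shows "a0 = a2 \<and> b0 = b1"
proof -
  define J where "J = jacobi3 a0 a1 a2 b0 b1"
  define U where "U = evol J T"
  obtain c where c1: "norm c = 1" and u00: "U $ 0 $ 0 = 0" and u10: "U $ 1 $ 0 = 0" and u20: "U $ 2 $ 0 = c"
    using PST_col[OF P] unfolding U_def J_def by metis
  have cm: "J ** U = U ** J" unfolding U_def J_def by (rule jac_comm)
  have un: "cnj (U$0$a) * U$0$b + cnj (U$1$a) * U$1$b + cnj (U$2$a) * U$2$b = (if a = b then 1 else 0)" for a b
    unfolding U_def J_def by (rule uni3[OF evol_unitary[OF jac_herm]])
  have e0: "(J ** U) $ 0 $ 0 = (U ** J) $ 0 $ 0" using cm by simp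
  have e1: "(J ** U) $ 1 $ 0 = (U ** J) $ 1 $ 0" using cm by simp
  have e2: "(J ** U) $ 2 $ 0 = (U ** J) $ 2 $ 0" using cm by simp
  have f0: "U $ 0 $ 1 * b0 = 0" using e0 u00 u10 u20
    by (simp add: matrix_matrix_mult_def sum3 J_def jac_entries)
  have f1: "U $ 1 $ 1 * b0 = b1 * c" using e1 u00 u10 u20
    by (simp add: matrix_matrix_mult_def sum3 J_def jac_entries)
  have f2: "c * a0 + U $ 2 $ 1 * b0 = a2 * c" using e2 u00 u10 u20
    by (simp add: matrix_matrix_mult_def sum3 J_def jac_entries)
  have "cnj c * U$2$1 = 0" using un[of 0 1] u00 u10 u20 by simp
  then have u21: "U$2$1 = 0" using c1 by auto
  have u01: "U$0$1 = 0" using f0 b0 by simp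
  from f2 u21 have "c * (a0 - a2) = 0" by (simp add: algebra_simps)
  then have "a0 = a2" using c1 by auto
  have "cnj (U$1$1) * U$1$1 = 1" using un[of 1 1] u01 u21 by simp
  then have "norm (U$1$1) = 1" by (rule cnj_norm1)
  moreover have "norm (U $ 1 $ 1 * b0) = norm (b1 * c)" using f1 by simp
  ultimately have "b0 = b1" using c1 b0 b1 by (simp add: norm_mult)
  with \<open>a0 = a2\<close> show ?thesis by simp
qed



definition Rf :: "complex^3^3" where "Rf = (\<chi> i j. if i + j = (2::3) then 1 else 0)"

lemma Rf_entries:
  "Rf $ 0 $ 0 = 0" "Rf $ 0 $ 1 = 0" "Rf $ 0 $ 2 = 1"
  "Rf $ 1 $ 0 = 0" "Rf $ 1 $ 1 = 1" "Rf $ 1 $ 2 = 0"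
  "Rf $ 2 $ 0 = 1" "Rf $ 2 $ 1 = 0" "Rf $ 2 $ 2 = 0"
  by (simp_all add: Rf_def)

lemma Rf_comm: "Rf ** jacobi3 a0 a1 a0 b0 b0 = jacobi3 a0 a1 a0 b0 b0 ** Rf"
proof -
  have "(Rf ** jacobi3 a0 a1 a0 b0 b0) $ i $ j = (jacobi3 a0 a1 a0 b0 b0 ** Rf) $ i $ j" for i j
    using three_cases[of i] three_cases[of j]
    by (elim disjE) (simp_all add: matrix_matrix_mult_def sum3 Rf_entries jac_entries)
  then show ?thesis by (simp add: vec_eq_iff)
qed

theorem mainTheorem1:
  fixes a0 a1 a2 b0 b1 T0 :: real
  assumes "b0 > 0" and "b1 > 0"
    and "PST (jacobi3 a0 a1 a2 b0 b1) T0"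
    and "\<forall>T. 0 < T \<and> T < T0 \<longrightarrow> \<not> PST (jacobi3 a0 a1 a2 b0 b1) T"
  shows "\<not> (\<exists>t. 0 < t \<and> t < T0 \<and>
           cinner (evol (jacobi3 a0 a1 a2 b0 b1) t *v e0) e0 = 0)"
proof
  assume "\<exists>t. 0 < t \<and> t < T0 \<and> cinner (evol (jacobi3 a0 a1 a2 b0 b1) t *v e0) e0 = 0"
  then obtain t where t0: "0 < t" and tT: "t < T0"
    and z: "cinner (evol (jacobi3 a0 a1 a2 b0 b1) t *v e0) e0 = 0" by blast
  from PST_sym[OF assms(1,2,3)] have s: "a2 = a0" "b1 = b0" by auto
  define J where "J = jacobi3 a0 a1 a0 b0 b0"
  define U where "U = evol J t"
  have u00: "U $ 0 $ 0 = 0" using z s by (simp add: U_def J_def cinner_e0 mv_e0)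
  have cm: "U ** Rf = Rf ** U"
    unfolding U_def evol_def J_def by (rule mexp_commute[symmetric]) (rule Rf_comm)
  have un: "cnj (U$0$a) * U$0$b + cnj (U$1$a) * U$1$b + cnj (U$2$a) * U$2$b = (if a = b then 1 else 0)" for a b
    unfolding U_def J_def by (rule uni3[OF evol_unitary[OF jac_herm]])
  have "(U ** Rf) $ 0 $ 0 = (Rf ** U) $ 0 $ 0" using cm by simp
  then have r1: "U $ 0 $ 2 = U $ 2 $ 0" by (simp add: matrix_matrix_mult_def sum3 Rf_entries)
  have "(U ** Rf) $ 0 $ 2 = (Rf ** U) $ 0 $ 2" using cm by simp
  then have r2: "U $ 0 $ 0 = U $ 2 $ 2" by (simp add: matrix_matrix_mult_def sum3 Rf_entries)
  have "(U ** Rf) $ 1 $ 0 = (Rf ** U) $ 1 $ 0" using cm by simp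
  then have r3: "U $ 1 $ 2 = U $ 1 $ 0" by (simp add: matrix_matrix_mult_def sum3 Rf_entries)
  have "cnj (U$1$0) * U$1$0 = 0" using un[of 0 2] u00 r1 r2 r3 by simp
  then have u10: "U$1$0 = 0" by simp
  have "cnj (U$2$0) * U$2$0 = 1" using un[of 0 0] u00 u10 by simp
  then have n1: "norm (U$2$0) = 1" by (rule cnj_norm1)
  define ph where "ph = Arg (U$2$0)"
  have ex: "exp (\<i> * complex_of_real ph) = U$2$0"
    using rcis_cmod_Arg[of "U$2$0"] n1 by (simp add: ph_def rcis_def cis_conv_exp)
  have "U *v e0 = exp (\<i> * complex_of_real ph) *s eN"
  proof -
    have "(U *v e0) $ i = (exp (\<i> * complex_of_real ph) *s eN) $ i" for i
      using three_cases[of i] u00 u10 ex by (auto simp: mv_e0 eN_comp)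
    then show ?thesis by (simp add: vec_eq_iff)
  qed
  then have "PST (jacobi3 a0 a1 a2 b0 b1) t" using t0 s by (auto simp: PST_def U_def J_def)
  then show False using assms(4) t0 tT by blast
qed


end
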